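(* Let $N\ge 1$ and let $\mathbf{g}\in\mathbb{C}^N$ be a window such that, for every $\ell=0,1,\dots,N-1$, the DFT of the length-$N$ sequence $m\mapsto \mathbf{g}[m]\,\overline{\mathbf{g}[(m-\ell)\bmod N]}$ is non-vanishing (all its entries are nonzero). Then for every $\mathbf{x}\in\mathbb{C}^N$, the LS Algorithm described in the context, applied to the noise-free STFT magnitude $\mathbf{Y}[m,k]=|\mathbf{X}[m,k]|^2$ of $\mathbf{x}$ (with $L=1$), outputs $\hat{\mathbf{x}}=e^{i\phi}\mathbf{x}$ for some $\phi\in\mathbb{R}$, i.e. it recovers $\mathbf{x}$ up to global phase.
   Context: Signals and windows are indexed by $\{0,\dots,N-1\}$ and extended $N$-periodically. The STFT of $\mathbf{x}\in\mathbb{C}^N$ with window $\mathbf{g}$ and step $L=1$ is $\mathbf{X}[m,k]=\sum_{n=0}^{N-1}\mathbf{x}[n]\mathbf{g}[m-n]e^{-2\pi i kn/N}$ for $m,k=0,\dots,N-1$. The DFT of $\mathbf{v}\in\mathbb{C}^N$ is $(\mathbf{F}\mathbf{v})[k]=\sum_n \mathbf{v}[n]e^{-2\pi i kn/N}$; $\mathbf{F}^*$ denotes its conjugate transpose. For a matrix $\mathbf{M}\in\mathbb{C}^{N\times N}$ and $\ell\in\{0,\dots,N-1\}$, $\mathrm{diag}(\mathbf{M},\ell)\in\mathbb{C}^N$ is the vector of entries $\mathbf{M}_{i,(i+\ell)\bmod N}$, $i=0,\dots,N-1$. LS Algorithm: given $\mathbf{Y}[m,k]$, (1) compute $\mathbf{Z}[m,\ell]=\sum_{k=0}^{N-1}\mathbf{Y}[m,k]e^{-2\pi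 i k\ell/N}$ and set $\mathbf{z}_\ell=(\mathbf{Z}[m,\ell])_{m=0}^{N-1}$; (2) for each $\ell=0,\dots,N-1$ compute $\mathbf{x}_\ell=\frac1N\mathbf{F}^*\mathbf{\Sigma}_\ell^{-1}\mathbf{F}\mathbf{z}_\ell$, where $\mathbf{\Sigma}_\ell$ is the diagonal matrix whose diagonal is $\mathbf{F}\big(\mathbf{g}[n]\overline{\mathbf{g}[(n-\ell)\bmod N]}\big)_{n=0}^{N-1}$ (with the normalization of $\mathbf{F}$ chosen so that $\mathbf{F}^*\mathbf{\Sigma}_\ell\mathbf{F}$ is the circulant matrix $\mathbf{G}_\ell$ with first column $(\mathbf{g}[m]\overline{\mathbf{g}[(m-\ell)\bmod N]})_m$, i.e. $\mathbf{x}_\ell=\frac1N\mathbf{G}_\ell^{-1}\mathbf{z}_\ell$); (3) form $\mathbf{X}\in\mathbb{C}^{N\times N}$ with $\mathrm{diag}(\mathbf{X},\ell)=\mathbf{x}_\ell$ for all $\ell$; (4) output $\hat{\mathbf{x}}=\sqrt{\lambda_{\max}}\,u_{\max}$, where $\lambda_{\max}$ is the largest eigenvalue of $\mathbf{X}$ and $u_{\max}$ an associated unit eigenvector. *)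

theory Defs
  imports Complex_Main "Jordan_Normal_Form.Char_Poly"
begin

definition pidx :: "nat \<Rightarrow> int \<Rightarrow> nat" where
  "pidx N a = nat (a mod int N)"

definition per :: "complex vec \<Rightarrow> int \<Rightarrow> complex" where
  "per v a = v $ pidx (dim_vec v) a"

definition omega :: "nat \<Rightarrow> int \<Rightarrow> complex" where
  "omega N t = cis (- 2 * pi * real_of_int t / real N)"

definition DFT :: "complex vec \<Rightarrow> complex vec" where
  "DFT v = vec (dim_vec v) (\<lambda>k. \<Sum>n<dim_vec v. v $ n * omega (dim_vec v) (int k * int n))"

definition IDFT_adj :: "complex vec \<Rightarrow> complex vec" where
  "IDFT_adj w = vec (dim_vec w) (\<lambda>n. \<Sum>k<dim_vec w. w $ k * cnj (omega (dim_vec w) (int k * int n)))"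

definition STFT :: "complex vec \<Rightarrow> complex vec \<Rightarrow> complex mat" where
  "STFT g x = mat (dim_vec x) (dim_vec x)
     (\<lambda>(m,k). \<Sum>n<dim_vec x. x $ n * per g (int m - int n) * omega (dim_vec x) (int k * int n))"

definition win_prod :: "complex vec \<Rightarrow> nat \<Rightarrow> complex vec" where
  "win_prod g l = vec (dim_vec g) (\<lambda>m. g $ m * cnj (per g (int m - int l)))"

definition LS_z :: "complex mat \<Rightarrow> nat \<Rightarrow> complex vec" where
  "LS_z Y l = vec (dim_row Y) (\<lambda>m. \<Sum>k<dim_col Y. Y $$ (m,k) * omega (dim_col Y) (int k * int l))"

(* Step (2): x_l = (1/N) G_l^{-1} z_l, where G_l is the circulant matrix with first column
   win_prod g l.  With the unnormalised DFT F above, G_l = (1/N) F^* diag(F (win_prod g l)) F,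
   hence x_l = (1/N^2) F^* Sigma_l^{-1} F z_l with Sigma_l = diag(F (win_prod g l)). *)
definition LS_xl :: "complex vec \<Rightarrow> complex mat \<Rightarrow> nat \<Rightarrow> complex vec" where
  "LS_xl g Y l = (let N = dim_vec g; s = DFT (win_prod g l); fz = DFT (LS_z Y l) in
     (1 / (of_nat N)^2) \<cdot>\<^sub>v IDFT_adj (vec N (\<lambda>k. fz $ k / s $ k)))"

(* Step (3): the matrix X with diag(X,l) = x_l, i.e. X[i,(i+l) mod N] = x_l[i] *)
definition LS_matrix :: "complex vec \<Rightarrow> complex mat \<Rightarrow> complex mat" where
  "LS_matrix g Y = (let N = dim_vec g in
     mat N N (\<lambda>(i,j). LS_xl g Y (pidx N (int j - int i)) $ i))"

(* Step (4): lam is a largest eigenvalue (eigenvalue of maximal real part; the matrix is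
   Hermitian in the situation of interest so its eigenvalues are real) *)
definition largest_eigenvalue :: "complex mat \<Rightarrow> complex \<Rightarrow> bool" where
  "largest_eigenvalue M lam \<longleftrightarrow> eigenvalue M lam \<and> (\<forall>mu. eigenvalue M mu \<longrightarrow> Re mu \<le> Re lam)"

definition unit_vec :: "complex vec \<Rightarrow> bool" where
  "unit_vec u \<longleftrightarrow> (\<Sum>i<dim_vec u. (cmod (u $ i))^2) = 1"

definition LS_output :: "complex vec \<Rightarrow> complex mat \<Rightarrow> complex vec \<Rightarrow> bool" where
  "LS_output g Y xhat \<longleftrightarrow> (\<exists>lam u. largest_eigenvalue (LS_matrix g Y) lam \<and>
      eigenvector (LS_matrix g Y) u lam \<and> unit_vec u \<and> xhat = csqrt lam \<cdot>\<^sub>v u)"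

end

theory Submission
  imports Defs
begin

lemma omega_add: "omega N (a + b) = omega N a * omega N b"
proof -
  have "- 2 * pi * real_of_int (a + b) / real N = - 2 * pi * real_of_int a / real N + - 2 * pi * real_of_int b / real N"
    by (simp add: distrib_left add_divide_distrib diff_divide_distrib)
  thus ?thesis unfolding omega_def cis_mult by simp
qed

lemma cnj_omega: "cnj (omega N a) = omega N (- a)"
  unfolding omega_def by (simp add: cis_cnj)

lemma omega_mult_N: "N > 0 \<Longrightarrow> omega N (int N * q) = 1"
proof -
  assume N: "N > 0"
  have "- 2 * pi * real_of_int (int N * q) / real N = real_of_int (-q) * (2*pi)" using N by simp
  hence "omega N (int N * q) = cis ((2*pi) * real_of_int (-q))" unfolding omega_def by (simp add: mult.commute)
  also have "\<dots> = 1" unfolding cis.ctr by (simp only: cos_int_2pin sin_int_2pin) (simp add: complex_eq_iff)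
  finally show ?thesis .
qed

lemma omega_mod: "N > 0 \<Longrightarrow> omega N (a mod int N) = omega N a"
proof -
  assume N: "N > 0"
  have "omega N a = omega N (a mod int N + int N * (a div int N))" by simp
  also have "\<dots> = omega N (a mod int N)" by (simp only: omega_add omega_mult_N[OF N]) simp
  finally show ?thesis by simp
qed

lemma omega_eq_1: "N > 0 \<Longrightarrow> omega N t = 1 \<Longrightarrow> int N dvd t"
proof -
  assume N: "N > 0" and h: "omega N t = 1"
  hence "cos (- 2 * pi * real_of_int t / real N) = 1" unfolding omega_def
    by (metis Re_complex_of_real one_complex.sel(1) cis.sel(1))
  then obtain n :: int where n: "- 2 * pi * real_of_int t / real N = real_of_int n * 2 * pi"
    using cos_one_2pi_int by blast
  hence "pi * (- real_of_int t) = pi * (real_of_int n * real N)" using N by (simp add: field_simps)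
  hence "- real_of_int t = real_of_int n * real N" by (metis mult_cancel_left pi_neq_zero)
  hence "real_of_int (-t) = real_of_int (n * int N)" by simp
  hence "-t = n * int N" by (simp only: of_int_eq_iff)
  hence "t = int N * (-n)" by (simp add: algebra_simps)
  thus ?thesis by simp
qed

lemma omega_pow: "omega N (int k * t) = omega N t ^ k"
  unfolding omega_def by (simp add: DeMoivre algebra_simps)

lemma omega_sum: fixes t :: int assumes N: "N > 0"
  shows "(\<Sum>k<N. omega N (int k * t)) = (if int N dvd t then of_nat N else 0)"
proof (cases "int N dvd t")
  case True
  then obtain q where "t = int N * q" by blast
  hence "omega N (int k * t) = 1" for k using omega_mult_N[OF N, of "int k * q"] by (simp add: algebra_simps)
  thus ?thesis using True by simp
next
  case False
  hence ne: "omega N t \<noteq> 1" using omega_eq_1[OF N] by blast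
  have "omega N t ^ N = 1" using omega_pow[of N N t, symmetric] omega_mult_N[OF N] by (simp add: mult.commute)
  thus ?thesis using False ne by (simp add: omega_pow geometric_sum)
qed

lemma per_mod: "dim_vec v = N \<Longrightarrow> per v (a mod int N) = per v a"
  by (simp add: per_def pidx_def)

lemma per_congr: "dim_vec v = N \<Longrightarrow> a mod int N = b mod int N \<Longrightarrow> per v a = per v b"
  by (simp add: per_def pidx_def)

lemma per_nat: "n < dim_vec v \<Longrightarrow> per v (int n) = v $ n"
  by (simp add: per_def pidx_def)

lemma sum_shift:
  fixes h :: "int \<Rightarrow> 'a::comm_monoid_add"
  assumes N: "N > 0" and per: "\<And>a. h (a mod int N) = h a"
  shows "(\<Sum>m<N. h (int m - c)) = (\<Sum>m<N. h (int m))"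
proof (rule sum.reindex_bij_witness[where j="\<lambda>a. nat ((int a - c) mod int N)" and i="\<lambda>b. nat ((int b + c) mod int N)"])
  fix a assume a: "a \<in> {..<N}"
  have "((int a - c) mod int N + c) mod int N = (int a - c + c) mod int N" by (simp add: mod_add_left_eq)
  also have "\<dots> = int a" using a by simp
  finally show "nat ((int (nat ((int a - c) mod int N)) + c) mod int N) = a" using N by simp
  show "nat ((int a - c) mod int N) \<in> {..<N}" using N by (simp add: nat_less_iff)
  show "h (int (nat ((int a - c) mod int N))) = h (int a - c)" using N per by simp
next
  fix b assume b: "b \<in> {..<N}"
  have "((int b + c) mod int N - c) mod int N = (int b + c - c) mod int N" by (simp add: mod_diff_left_eq)
  also have "\<dots> = int b" using b by simp
  finally show "nat ((int (nat ((int b + c) mod int N)) - c) mod int N) = b" using N by simp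
  show "nat ((int b + c) mod int N) \<in> {..<N}" using N by (simp add: nat_less_iff)
qed

lemma dvd_delta: assumes N: "N > 0" and n: "n' < N"
  shows "(int N dvd (a - int n')) \<longleftrightarrow> n' = nat (a mod int N)"
proof -
  have "(int N dvd (a - int n')) \<longleftrightarrow> a mod int N = int n' mod int N" by (simp add: mod_eq_dvd_iff)
  also have "\<dots> \<longleftrightarrow> a mod int N = int n'" using n by simp
  also have "\<dots> \<longleftrightarrow> n' = nat (a mod int N)" using N by auto
  finally show ?thesis .
qed

lemma sum_delta_dvd:
  fixes f :: "nat \<Rightarrow> complex"
  assumes N: "N > 0"
  shows "(\<Sum>n'<N. f n' * (if int N dvd (a - int n') then of_nat N else 0)) = f (nat (a mod int N)) * of_nat N"
proof -
  have "(\<Sum>n'<N. f n' * (if int N dvd (a - int n') then of_nat N else 0)) =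
        (\<Sum>n'<N. if n' = nat (a mod int N) then f n' * of_nat N else 0)"
    by (rule sum.cong) (auto simp: dvd_delta[OF N])
  also have "\<dots> = f (nat (a mod int N)) * of_nat N" using N by (simp add: nat_less_iff)
  finally show ?thesis .
qed

lemma Z_formula:
  fixes x g :: "complex vec" and m :: nat
  assumes N: "N > 0" and dx: "dim_vec x = N" and dg: "dim_vec g = N"
  defines "S \<equiv> \<lambda>k. \<Sum>n<N. x$n * per g (int m - int n) * omega N (int k * int n)"
  shows "(\<Sum>k<N. S k * cnj (S k) * omega N (int k * int l)) =
     of_nat N * (\<Sum>n<N. x$n * cnj (per x (int n + int l)) * (per g (int m - int n) * cnj (per g (int m - int n - int l))))"
proof -
  define c where "c = (\<lambda>n n'. x$n * per g (int m - int n) * cnj (x$n') * cnj (per g (int m - int n')))"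
  have om: "omega N (int k * int n) * cnj (omega N (int k * int n')) * omega N (int k * int l) =
      omega N (int k * (int n + int l - int n'))" for k n n'
  proof -
    have e: "int k * (int n + int l - int n') = int k * int n + (- (int k * int n')) + int k * int l"
      by (simp add: algebra_simps)
    show ?thesis unfolding e omega_add cnj_omega ..
  qed
  have 1: "S k * cnj (S k) * omega N (int k * int l) =
      (\<Sum>n<N. \<Sum>n'<N. c n n' * omega N (int k * (int n + int l - int n')))" for k
  proof -
    have "S k * cnj (S k) * omega N (int k * int l) =
       (\<Sum>n<N. \<Sum>n'<N. (x$n * per g (int m - int n) * omega N (int k * int n)) *
           cnj (x$n' * per g (int m - int n') * omega N (int k * int n')) * omega N (int k * int l))"
      unfolding S_def cnj_sum sum_distrib_right sum_distrib_left by (rule sum.swap)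
    also have "\<dots> = (\<Sum>n<N. \<Sum>n'<N. c n n' * (omega N (int k * int n) * cnj (omega N (int k * int n')) * omega N (int k * int l)))"
      unfolding c_def by (intro sum.cong refl) (simp add: algebra_simps)
    finally show ?thesis unfolding om .
  qed
  have "(\<Sum>k<N. S k * cnj (S k) * omega N (int k * int l)) =
      (\<Sum>n<N. \<Sum>n'<N. c n n' * (\<Sum>k<N. omega N (int k * (int n + int l - int n'))))"
  proof -
    have "(\<Sum>k<N. S k * cnj (S k) * omega N (int k * int l)) =
      (\<Sum>k<N. \<Sum>n<N. \<Sum>n'<N. c n n' * omega N (int k * (int n + int l - int n')))" unfolding 1 ..
    also have "\<dots> = (\<Sum>n<N. \<Sum>k<N. \<Sum>n'<N. c n n' * omega N (int k * (int n + int l - int n')))"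
      by (rule sum.swap)
    also have "\<dots> = (\<Sum>n<N. \<Sum>n'<N. \<Sum>k<N. c n n' * omega N (int k * (int n + int l - int n')))"
      by (rule sum.cong[OF refl], rule sum.swap)
    finally show ?thesis by (simp only: sum_distrib_left)
  qed
  also have "\<dots> = (\<Sum>n<N. \<Sum>n'<N. c n n' * (if int N dvd (int n + int l - int n') then of_nat N else 0))"
    unfolding omega_sum[OF N] ..
  also have "\<dots> = (\<Sum>n<N. c n (nat ((int n + int l) mod int N)) * of_nat N)"
    by (intro sum.cong refl sum_delta_dvd[OF N])
  also have "\<dots> = of_nat N * (\<Sum>n<N. x$n * cnj (per x (int n + int l)) * (per g (int m - int n) * cnj (per g (int m - int n - int l))))"
  proof -
    have "c n (nat ((int n + int l) mod int N)) = x$n * cnj (per x (int n + int l)) * (per g (int m - int n) * cnj (per g (int m - int n - int l)))" for n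
    proof -
      have "x $ nat ((int n + int l) mod int N) = per x (int n + int l)"
        using dx by (simp add: per_def pidx_def)
      moreover have "per g (int m - int (nat ((int n + int l) mod int N))) = per g (int m - int n - int l)"
      proof (rule per_congr[OF dg])
        have "int (nat ((int n + int l) mod int N)) = (int n + int l) mod int N" using N by simp
        moreover have "(int m - (int n + int l) mod int N) mod int N = (int m - (int n + int l)) mod int N"
          by (rule mod_diff_right_eq)
        ultimately show "(int m - int (nat ((int n + int l) mod int N))) mod int N = (int m - int n - int l) mod int N"
          by (simp add: diff_diff_eq)
      qed
      ultimately show ?thesis unfolding c_def by simp
    qed
    thus ?thesis unfolding sum_distrib_left by (intro sum.cong refl) (simp only: mult.commute)
  qed
  finally show ?thesis .
qed


lemma omega_mult_mod: "N > 0 \<Longrightarrow> omega N (k * (t mod int N)) = omega N (k * t)"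
  by (metis mod_mult_right_eq omega_mod)

lemma DFT_conv:
  fixes w :: "complex vec" and a :: "nat \<Rightarrow> complex"
  assumes N: "N > 0" and dw: "dim_vec w = N"
  shows "(\<Sum>m<N. (\<Sum>n<N. a n * per w (int m - int n)) * omega N (int k * int m)) =
     (\<Sum>n<N. a n * omega N (int k * int n)) * (\<Sum>j<N. w$j * omega N (int k * int j))"
proof -
  define h where "h = (\<lambda>t. per w t * omega N (int k * t))"
  have hp: "h (t mod int N) = h t" for t
    unfolding h_def using per_mod[OF dw] omega_mult_mod[OF N] by simp
  have "(\<Sum>m<N. (\<Sum>n<N. a n * per w (int m - int n)) * omega N (int k * int m)) =
      (\<Sum>m<N. \<Sum>n<N. a n * omega N (int k * int n) * h (int m - int n))"
  proof (intro sum.cong refl, unfold sum_distrib_right, intro sum.cong refl)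
    fix m n
    have "omega N (int k * int m) = omega N (int k * int n) * omega N (int k * (int m - int n))"
      unfolding omega_add[symmetric] by (simp add: algebra_simps)
    thus "a n * per w (int m - int n) * omega N (int k * int m) = a n * omega N (int k * int n) * h (int m - int n)"
      unfolding h_def by simp
  qed
  also have "\<dots> = (\<Sum>n<N. a n * omega N (int k * int n) * (\<Sum>m<N. h (int m - int n)))"
    by (subst sum.swap) (simp add: sum_distrib_left)
  also have "\<dots> = (\<Sum>n<N. a n * omega N (int k * int n) * (\<Sum>m<N. h (int m)))"
    using sum_shift[of N h, OF N hp] by simp
  also have "(\<Sum>m<N. h (int m)) = (\<Sum>j<N. w$j * omega N (int k * int j))"
    unfolding h_def using dw by (intro sum.cong refl) (simp add: per_nat)
  finally show ?thesis by (simp add: sum_distrib_right)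
qed

lemma IDFT_DFT:
  fixes a :: "nat \<Rightarrow> complex"
  assumes N: "N > 0" and i: "i < N"
  shows "(\<Sum>k<N. (\<Sum>n<N. a n * omega N (int k * int n)) * cnj (omega N (int k * int i))) = of_nat N * a i"
proof -
  have "(\<Sum>k<N. (\<Sum>n<N. a n * omega N (int k * int n)) * cnj (omega N (int k * int i))) =
      (\<Sum>k<N. \<Sum>n<N. a n * omega N (int k * (int n - int i)))"
  proof (intro sum.cong refl, unfold sum_distrib_right, intro sum.cong refl)
    fix k n
    have "omega N (int k * (int n - int i)) = omega N (int k * int n) * omega N (- (int k * int i))"
      unfolding omega_add[symmetric] by (simp add: algebra_simps)
    thus "a n * omega N (int k * int n) * cnj (omega N (int k * int i)) = a n * omega N (int k * (int n - int i))"
      by (simp add: cnj_omega)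
  qed
  also have "\<dots> = (\<Sum>n<N. a n * (\<Sum>k<N. omega N (int k * (int n - int i))))"
    by (subst sum.swap) (simp add: sum_distrib_left)
  also have "\<dots> = (\<Sum>n<N. a n * (if int N dvd (int i - int n) then of_nat N else 0))"
  proof (intro sum.cong refl)
    fix n
    have "int N dvd (int n - int i) \<longleftrightarrow> int N dvd (int i - int n)"
      by (metis dvd_minus_iff minus_diff_eq)
    thus "a n * (\<Sum>k<N. omega N (int k * (int n - int i))) = a n * (if int N dvd (int i - int n) then of_nat N else 0)"
      unfolding omega_sum[OF N] by simp
  qed
  also have "\<dots> = a (nat (int i mod int N)) * of_nat N" by (rule sum_delta_dvd[OF N])
  also have "\<dots> = of_nat N * a i" using i by simp
  finally show ?thesis .
qed

lemma per_win_prod: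
  assumes N: "N > 0" and dg: "dim_vec g = N"
  shows "per (win_prod g l) t = per g t * cnj (per g (t - int l))"
proof -
  let ?p = "pidx N t"
  have p: "?p < N" using N unfolding pidx_def by (simp add: nat_less_iff)
  have ip: "int ?p = t mod int N" using N unfolding pidx_def by simp
  have "per (win_prod g l) t = g $ ?p * cnj (per g (int ?p - int l))"
    unfolding per_def win_prod_def using p dg by simp
  also have "g $ ?p = per g t" unfolding per_def dg ..
  also have "per g (int ?p - int l) = per g (t - int l)"
    by (rule per_congr[OF dg]) (simp add: ip mod_diff_left_eq)
  finally show ?thesis .
qed


lemma LS_xl_eq:
  fixes g x :: "complex vec"
  assumes N: "N > 0" and dg: "dim_vec g = N" and dx: "dim_vec x = N"
    and nz: "\<forall>k<N. DFT (win_prod g l) $ k \<noteq> 0" and i: "i < N"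
  shows "LS_xl g (map_mat (\<lambda>c. of_real ((cmod c)^2)) (STFT g x)) l $ i = x$i * cnj (per x (int i + int l))"
proof -
  define Y :: "complex mat" where "Y = map_mat (\<lambda>c. of_real ((cmod c)^2)) (STFT g x)"
  define a where "a = (\<lambda>n. x$n * cnj (per x (int n + int l)))"
  define w where "w = win_prod g l"
  have dw: "dim_vec w = N" unfolding w_def win_prod_def using dg by simp
  have dY: "dim_row Y = N" "dim_col Y = N" unfolding Y_def STFT_def using dx by auto
  define S where "S = (\<lambda>m k. \<Sum>n<N. x$n * per g (int m - int n) * omega N (int k * int n))"
  have Yent: "Y $$ (m,k) = S m k * cnj (S m k)" if "m < N" "k < N" for m k
  proof -
    have "Y $$ (m,k) = of_real ((cmod (S m k))^2)"
      unfolding Y_def STFT_def S_def using that dx by simp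
    thus ?thesis by (simp only: complex_norm_square)
  qed
  have z: "LS_z Y l $ m = of_nat N * (\<Sum>n<N. a n * per w (int m - int n))" if m: "m < N" for m
  proof -
    have "LS_z Y l $ m = (\<Sum>k<N. S m k * cnj (S m k) * omega N (int k * int l))"
      unfolding LS_z_def using m dY Yent by simp
    also have "\<dots> = of_nat N * (\<Sum>n<N. x$n * cnj (per x (int n + int l)) * (per g (int m - int n) * cnj (per g (int m - int n - int l))))"
      unfolding S_def by (rule Z_formula[OF N dx dg])
    also have "\<dots> = of_nat N * (\<Sum>n<N. a n * per w (int m - int n))"
      unfolding a_def w_def per_win_prod[OF N dg] by simp
    finally show ?thesis .
  qed
  define A where "A = (\<lambda>k. \<Sum>n<N. a n * omega N (int k * int n))"
  have fz: "DFT (LS_z Y l) $ k = of_nat N * A k * DFT w $ k" if k: "k < N" for k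
  proof -
    have "DFT (LS_z Y l) $ k = (\<Sum>m<N. (LS_z Y l $ m) * omega N (int k * int m))"
      unfolding DFT_def LS_z_def using dY k by simp
    also have "\<dots> = of_nat N * (\<Sum>m<N. (\<Sum>n<N. a n * per w (int m - int n)) * omega N (int k * int m))"
      unfolding sum_distrib_left using z by (intro sum.cong refl) (simp add: mult.assoc)
    also have "\<dots> = of_nat N * (A k * (\<Sum>j<N. w$j * omega N (int k * int j)))"
      unfolding A_def DFT_conv[OF N dw] ..
    also have "(\<Sum>j<N. w$j * omega N (int k * int j)) = DFT w $ k"
      unfolding DFT_def using dw k by simp
    finally show ?thesis by simp
  qed
  have q: "vec N (\<lambda>k. DFT (LS_z Y l) $ k / DFT w $ k) $ k = of_nat N * A k" if k: "k < N" for k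
    using fz[OF k] nz k unfolding w_def by simp
  have "LS_xl g Y l $ i = (1 / (of_nat N)^2) * (\<Sum>k<N. (of_nat N * A k) * cnj (omega N (int k * int i)))"
    unfolding LS_xl_def Let_def IDFT_adj_def using dg i q unfolding w_def by simp
  also have "\<dots> = (1 / (of_nat N)^2) * (of_nat N * (\<Sum>k<N. A k * cnj (omega N (int k * int i))))"
    by (simp only: mult.assoc sum_distrib_left[symmetric])
  also have "\<dots> = (1 / (of_nat N)^2) * (of_nat N * (of_nat N * a i))"
    unfolding A_def IDFT_DFT[OF N i] ..
  also have "\<dots> = a i" using N by (simp add: power2_eq_square)
  finally show ?thesis unfolding Y_def a_def .
qed


lemma LS_matrix_eq:
  fixes g x :: "complex vec"
  assumes N: "N > 0" and dg: "dim_vec g = N" and dx: "dim_vec x = N"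
    and nz: "\<forall>l<N. \<forall>k<N. DFT (win_prod g l) $ k \<noteq> 0"
  shows "LS_matrix g (map_mat (\<lambda>c. of_real ((cmod c)^2)) (STFT g x)) = mat N N (\<lambda>(i,j). x$i * cnj (x$j))"
proof -
  have ent: "LS_xl g (map_mat (\<lambda>c. of_real ((cmod c)^2)) (STFT g x)) (pidx N (int j - int i)) $ i = x$i * cnj (x$j)"
    if i: "i < N" and j: "j < N" for i j
  proof -
    let ?l = "pidx N (int j - int i)"
    have l: "?l < N" using N unfolding pidx_def by (simp add: nat_less_iff)
    have il: "int ?l = (int j - int i) mod int N" using N unfolding pidx_def by simp
    have "per x (int i + int ?l) = per x (int j)"
    proof (rule per_congr[OF dx])
      have "(int i + (int j - int i) mod int N) mod int N = (int i + (int j - int i)) mod int N"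
        by (rule mod_add_right_eq)
      thus "(int i + int ?l) mod int N = int j mod int N" unfolding il by simp
    qed
    also have "\<dots> = x $ j" using j dx by (simp add: per_nat)
    finally show ?thesis using LS_xl_eq[OF N dg dx _ i, of ?l] nz l by simp
  qed
  show ?thesis unfolding LS_matrix_def Let_def dg
    by (rule eq_matI) (auto simp del: of_real_power simp: ent)
qed

lemma nonzero_entry: "v \<in> carrier_vec N \<Longrightarrow> v \<noteq> 0\<^sub>v N \<Longrightarrow> \<exists>i<N. v$i \<noteq> 0"
  by (metis carrier_vecD eq_vecI index_zero_vec(1) index_zero_vec(2))


lemma M_mult:
  fixes x v :: "complex vec"
  assumes dx: "dim_vec x = N" and v: "v \<in> carrier_vec N"
  shows "mat N N (\<lambda>(i,j). x$i * cnj (x$j)) *\<^sub>v v = (\<Sum>j<N. cnj (x$j) * v$j) \<cdot>\<^sub>v x"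
proof (rule eq_vecI)
  show "dim_vec (mat N N (\<lambda>(i,j). x$i * cnj (x$j)) *\<^sub>v v) = dim_vec ((\<Sum>j<N. cnj (x$j) * v$j) \<cdot>\<^sub>v x)"
    using dx by simp
  fix i assume "i < dim_vec ((\<Sum>j<N. cnj (x$j) * v$j) \<cdot>\<^sub>v x)"
  hence i: "i < N" using dx by simp
  have "(mat N N (\<lambda>(i,j). x$i * cnj (x$j)) *\<^sub>v v) $ i = (\<Sum>j<N. x$i * cnj (x$j) * v$j)"
    using i v by (simp add: scalar_prod_def lessThan_atLeast0)
  also have "\<dots> = (\<Sum>j<N. cnj (x$j) * v$j) * x$i"
    by (simp add: sum_distrib_left sum_distrib_right mult.commute mult.left_commute)
  finally show "(mat N N (\<lambda>(i,j). x$i * cnj (x$j)) *\<^sub>v v) $ i = ((\<Sum>j<N. cnj (x$j) * v$j) \<cdot>\<^sub>v x) $ i"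
    using i dx by simp
qed

lemma ip_self: "(\<Sum>j<N. cnj (x$j) * x$j) = complex_of_real (\<Sum>j<N. (cmod (x$j))^2)"
  unfolding of_real_sum complex_norm_square by (simp add: mult.commute)

lemma eig_struct:
  fixes x u :: "complex vec"
  assumes dx: "dim_vec x = N"
    and ev: "eigenvector (mat N N (\<lambda>(i,j). x$i * cnj (x$j))) u mu" and mu: "mu \<noteq> 0"
  shows "mu = complex_of_real (\<Sum>j<N. (cmod (x$j))^2) \<and> u = ((\<Sum>j<N. cnj (x$j) * u$j) / mu) \<cdot>\<^sub>v x"
proof -
  define c where "c = (\<Sum>j<N. cnj (x$j) * u$j)"
  have u: "u \<in> carrier_vec N" and u0: "u \<noteq> 0\<^sub>v N"
    and eq: "mat N N (\<lambda>(i,j). x$i * cnj (x$j)) *\<^sub>v u = mu \<cdot>\<^sub>v u"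
    using ev unfolding eigenvector_def by auto
  have eq2: "c \<cdot>\<^sub>v x = mu \<cdot>\<^sub>v u" using eq M_mult[OF dx u] unfolding c_def by simp
  have ui: "u $ i = (c / mu) * x $ i" if i: "i < N" for i
  proof -
    have "(c \<cdot>\<^sub>v x) $ i = (mu \<cdot>\<^sub>v u) $ i" using eq2 by simp
    hence "c * x$i = mu * u$i" using i dx u by simp
    thus ?thesis using mu by (simp add: field_simps)
  qed
  have ueq: "u = (c / mu) \<cdot>\<^sub>v x"
    by (rule eq_vecI) (use u dx ui in auto)
  have c0: "c \<noteq> 0"
  proof
    assume "c = 0"
    hence "u = 0\<^sub>v N" using ueq dx by auto
    thus False using u0 by simp
  qed
  have "c = (\<Sum>j<N. cnj (x$j) * u$j)" by (simp only: c_def)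
  also have "\<dots> = (\<Sum>j<N. cnj (x$j) * ((c / mu) * x$j))" using ui by (intro sum.cong refl) simp
  also have "\<dots> = (c / mu) * (\<Sum>j<N. cnj (x$j) * x$j)"
    by (simp add: sum_distrib_left mult.commute mult.left_commute)
  finally have "c = (c / mu) * complex_of_real (\<Sum>j<N. (cmod (x$j))^2)" unfolding ip_self .
  hence "mu = complex_of_real (\<Sum>j<N. (cmod (x$j))^2)" using c0 mu by (simp add: field_simps)
  thus ?thesis using ueq unfolding c_def by simp
qed


lemma unit_phase: assumes "cmod t = 1" shows "\<exists>\<phi>::real. t = cis \<phi>"
proof
  show "t = cis (Arg t)" using rcis_cmod_Arg[of t] assms unfolding rcis_def by simp
qed

theorem theorem1:
  fixes N :: nat and g x :: "complex vec"
  assumes "N \<ge> 1"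
    and "g \<in> carrier_vec N"
    and "\<forall>l<N. \<forall>k<N. DFT (win_prod g l) $ k \<noteq> 0"
    and "x \<in> carrier_vec N"
  shows "(\<exists>xhat. LS_output g (map_mat (\<lambda>c. of_real ((cmod c)^2)) (STFT g x)) xhat) \<and>
         (\<forall>xhat. LS_output g (map_mat (\<lambda>c. of_real ((cmod c)^2)) (STFT g x)) xhat
           \<longrightarrow> (\<exists>\<phi>::real. xhat = cis \<phi> \<cdot>\<^sub>v x))"
proof -
  have N: "N > 0" using assms(1) by simp
  have dg: "dim_vec g = N" and dx: "dim_vec x = N" and xc: "x \<in> carrier_vec N" using assms(2,4) by auto
  define M where "M = mat N N (\<lambda>(i,j). x$i * cnj (x$j))"
  define nx where "nx = (\<Sum>j<N. (cmod (x$j))^2)"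
  have LM: "LS_matrix g (map_mat (\<lambda>c. of_real ((cmod c)^2)) (STFT g x)) = M"
    unfolding M_def by (rule LS_matrix_eq[OF N dg dx assms(3)])
  have out: "LS_output g (map_mat (\<lambda>c. of_real ((cmod c)^2)) (STFT g x)) xhat \<longleftrightarrow>
     (\<exists>lam u. largest_eigenvalue M lam \<and> eigenvector M u lam \<and> unit_vec u \<and> xhat = csqrt lam \<cdot>\<^sub>v u)" for xhat
    unfolding LS_output_def LM ..
  have dM: "dim_row M = N" unfolding M_def by simp
  have eigs: "mu = 0 \<or> mu = complex_of_real nx" if "eigenvalue M mu" for mu
    using that eig_struct[OF dx] unfolding eigenvalue_def M_def nx_def by blast
  have nx0: "nx \<ge> 0" unfolding nx_def by (simp add: sum_nonneg)
  show ?thesis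
  proof (cases "nx = 0")
    case True
    have x0: "x$j = 0" if "j < N" for j
    proof -
      have "(\<Sum>j<N. (cmod (x$j))^2) = 0" using True unfolding nx_def .
      hence "(cmod (x$j))^2 = 0" using that by (subst (asm) sum_nonneg_eq_0_iff) auto
      thus ?thesis by simp
    qed
    define e where "e = vec N (\<lambda>i. if i = 0 then (1::complex) else 0)"
    have ec: "e \<in> carrier_vec N" unfolding e_def by simp
    have Mv0: "M *\<^sub>v v = 0\<^sub>v N" if "v \<in> carrier_vec N" for v
      unfolding M_def M_mult[OF dx that] by (rule eq_vecI) (use dx x0 in auto)
    have ev: "eigenvector M e 0"
      unfolding eigenvector_def dM
    proof (intro conjI)
      show "e \<in> carrier_vec N" by (rule ec)
      show "e \<noteq> 0\<^sub>v N"
      proof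
        assume "e = 0\<^sub>v N"
        hence "e $ 0 = 0\<^sub>v N $ 0" by simp
        thus False using N unfolding e_def by simp
      qed
      show "M *\<^sub>v e = 0 \<cdot>\<^sub>v e" unfolding Mv0[OF ec] using ec by auto
    qed
    have lg: "largest_eigenvalue M 0"
    proof -
      have "eigenvalue M 0" using ev unfolding eigenvalue_def by blast
      moreover have "\<forall>mu. eigenvalue M mu \<longrightarrow> Re mu \<le> Re 0" using eigs True by force
      ultimately show ?thesis unfolding largest_eigenvalue_def by blast
    qed
    have ue: "unit_vec e"
    proof -
      have "(\<Sum>i<N. (cmod (e $ i))^2) = (\<Sum>i<N. if i = 0 then 1 else 0)"
        unfolding e_def by (intro sum.cong refl) auto
      also have "\<dots> = 1" using N by simp
      finally show ?thesis unfolding unit_vec_def e_def by simp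
    qed
    show ?thesis
    proof (intro conjI allI impI)
      show "\<exists>xhat. LS_output g (map_mat (\<lambda>c. of_real ((cmod c)^2)) (STFT g x)) xhat"
        unfolding out using lg ev ue by blast
    next
      fix xhat assume "LS_output g (map_mat (\<lambda>c. of_real ((cmod c)^2)) (STFT g x)) xhat"
      then obtain lam u where lam: "largest_eigenvalue M lam" and u: "eigenvector M u lam"
        and xh: "xhat = csqrt lam \<cdot>\<^sub>v u" unfolding out by blast
      have "lam = 0" using eigs[of lam] lam True unfolding largest_eigenvalue_def by auto
      moreover have "u \<in> carrier_vec N" using u dM unfolding eigenvector_def by auto
      ultimately have "xhat = cis 0 \<cdot>\<^sub>v x" unfolding xh
        by (intro eq_vecI) (use dx x0 in auto)
      thus "\<exists>\<phi>::real. xhat = cis \<phi> \<cdot>\<^sub>v x" by blast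
    qed
  next
    case False
    hence nxp: "nx > 0" using nx0 by simp
    define r where "r = complex_of_real nx"
    have r0: "r \<noteq> 0" unfolding r_def using nxp by simp
    have ipx: "(\<Sum>j<N. cnj (x$j) * x$j) = r" unfolding r_def nx_def by (rule ip_self)
    have x_ne: "x \<noteq> 0\<^sub>v N"
    proof
      assume "x = 0\<^sub>v N"
      hence "nx = 0" unfolding nx_def by simp
      thus False using nxp by simp
    qed
    have evx: "eigenvector M x r"
      unfolding eigenvector_def dM using xc x_ne unfolding M_def M_mult[OF dx xc] ipx by simp
    have eigs2: "Re mu \<le> Re r" if "eigenvalue M mu" for mu
      using eigs[OF that] nx0 unfolding r_def by auto
    have lgr: "largest_eigenvalue M r"
      unfolding largest_eigenvalue_def using evx eigs2 unfolding eigenvalue_def by blast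
    have lam_r: "lam = r" if "largest_eigenvalue M lam" for lam
    proof -
      have "eigenvalue M r" using evx unfolding eigenvalue_def by blast
      hence "Re r \<le> Re lam" using that unfolding largest_eigenvalue_def by blast
      moreover have "lam = 0 \<or> lam = r" using eigs that unfolding largest_eigenvalue_def r_def by blast
      ultimately show ?thesis using nxp unfolding r_def by auto
    qed
    show ?thesis
    proof (intro conjI allI impI)
      define a where "a = complex_of_real (1 / sqrt nx)"
      define u where "u = a \<cdot>\<^sub>v x"
      have uc: "u \<in> carrier_vec N" unfolding u_def using xc by simp
      have a0: "a \<noteq> 0" unfolding a_def using nxp by simp
      have evu: "eigenvector M u r"
        unfolding eigenvector_def dM
      proof (intro conjI)
        show "u \<in> carrier_vec N" by (rule uc)
        show "u \<noteq> 0\<^sub>v N"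
        proof
          assume "u = 0\<^sub>v N"
          have "(1/a) \<cdot>\<^sub>v u = x" unfolding u_def smult_smult_assoc using a0 by simp
          hence "x = 0\<^sub>v N" using \<open>u = 0\<^sub>v N\<close> by auto
          thus False using x_ne by simp
        qed
        have ipu: "(\<Sum>j<N. cnj (x$j) * u$j) = a * r"
        proof -
          have "(\<Sum>j<N. cnj (x$j) * u$j) = (\<Sum>j<N. a * (cnj (x$j) * x$j))"
            unfolding u_def using dx by (intro sum.cong refl) simp
          thus ?thesis unfolding sum_distrib_left[symmetric] ipx .
        qed
        have "M *\<^sub>v u = (a * r) \<cdot>\<^sub>v x" unfolding M_def using M_mult[OF dx uc] ipu by simp
        thus "M *\<^sub>v u = r \<cdot>\<^sub>v u" unfolding u_def by (simp add: smult_smult_assoc mult.commute)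
      qed
      have uu: "unit_vec u"
      proof -
        have "(\<Sum>i<N. (cmod (u $ i))^2) = (\<Sum>i<N. (1 / sqrt nx)^2 * (cmod (x $ i))^2)"
          unfolding u_def a_def using dx by (intro sum.cong refl) (simp add: norm_divide power_divide)
        also have "\<dots> = (1 / sqrt nx)^2 * nx" unfolding nx_def sum_distrib_left ..
        also have "\<dots> = 1" using nxp by (simp add: power_divide)
        finally show ?thesis unfolding unit_vec_def using uc by simp
      qed
      show "\<exists>xhat. LS_output g (map_mat (\<lambda>c. of_real ((cmod c)^2)) (STFT g x)) xhat"
        unfolding out using lgr evu uu by blast
    next
      fix xhat assume "LS_output g (map_mat (\<lambda>c. of_real ((cmod c)^2)) (STFT g x)) xhat"
      then obtain lam u where lam: "largest_eigenvalue M lam" and u: "eigenvector M u lam"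
        and uu: "unit_vec u" and xh: "xhat = csqrt lam \<cdot>\<^sub>v u" unfolding out by blast
      have lr: "lam = r" by (rule lam_r[OF lam])
      define c where "c = (\<Sum>j<N. cnj (x$j) * u$j)"
      have ueq: "u = (c / r) \<cdot>\<^sub>v x"
      proof -
        have l0: "lam \<noteq> 0" using r0 lr by simp
        have "u = (c / lam) \<cdot>\<^sub>v x"
          using eig_struct[OF dx, of u lam] u l0 unfolding M_def c_def by blast
        thus ?thesis using lr by simp
      qed
      have "1 = (\<Sum>i<N. (cmod (u $ i))^2)" using uu ueq dx unfolding unit_vec_def by simp
      also have "\<dots> = (\<Sum>i<N. (cmod (c / r))^2 * (cmod (x $ i))^2)"
        unfolding ueq using dx by (intro sum.cong refl) (simp add: norm_mult norm_divide power_mult_distrib power_divide)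
      also have "\<dots> = (cmod (c / r))^2 * nx" unfolding nx_def sum_distrib_left ..
      finally have one: "(cmod (c / r))^2 * nx = 1" by simp
      define t where "t = csqrt r * (c / r)"
      have cs: "csqrt r = complex_of_real (sqrt nx)" unfolding r_def using nx0 by (rule csqrt_of_real)
      have "(cmod t)^2 = nx * (cmod (c / r))^2"
        unfolding t_def cs norm_mult using nx0 by (simp add: power_mult_distrib)
      hence "(cmod t)^2 = 1" using one by (simp add: mult.commute)
      hence "cmod t = 1" using norm_ge_zero[of t] by (auto simp add: power2_eq_1_iff)
      then obtain \<phi> where "t = cis \<phi>" using unit_phase by blast
      have "xhat = t \<cdot>\<^sub>v x" unfolding xh lr ueq t_def by (simp add: smult_smult_assoc)
      thus "\<exists>\<phi>::real. xhat = cis \<phi> \<cdot>\<^sub>v x" using \<open>t = cis \<phi>\<close> by blast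
    qed
  qed
qed

end
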